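(* Let $r\in\mathbb Z_n$ and $1\le j\le\frac{n-1}2$, write $\mathcal U_k=\mathcal U_k(q^j+q^{-j})$, and let $\mathbf v=[1\ q^{2r}\ \cdots\ q^{2(n-1)r}]^T$. Put $\mathbf x_0=\mathbf v$ and for $1\le k\le n-1$ $$\mathbf x_k=q^{kr}\mathcal U_k\mathbf v+q^{(k-1)r}\sum_{s=0}^{\lfloor (k-1)/2\rfloor}(k-2s)\,\mathcal U_{k-1-2s}\mathbf v.$$ Then $\mathbf x_{j,r}=[\mathbf x_0;\dots;\mathbf x_{n-1}]$ satisfies $M\mathbf x_{j,r}=\lambda_{j,r}\mathbf x_{j,r}+\mathbf v_{j,r}$, where $\lambda_{j,r}=q^r(q^j+q^{-j})$ and $\mathbf v_{j,r}=[\mathbf v;\,q^r\mathcal U_1\mathbf v;\,\dots;\,q^{(n-1)r}\mathcal U_{n-1}\mathbf v]$ is a (nonzero) right eigenvector of $M$ with eigenvalue $\lambda_{j,r}$.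
   Context: $n\ge3$ odd, $q$ a primitive $n$-th root of unity in $\mathbb C$. $I$ is the $n\times n$ identity, $Z$ the $n\times n$ cyclic permutation matrix with $(Zu)_i=u_{i+1}$ (indices mod $n$). $M$ is the $n^2\times n^2$ block matrix of $n\times n$ blocks $M_{ab}$ ($0\le a,b\le n-1$) with $M_{a,a+1}=I$ ($0\le a\le n-2$), $M_{a,a-1}=Z$ ($1\le a\le n-2$), $M_{n-1,0}=2I$, $M_{n-1,n-2}=2Z$, other blocks zero (the McKay matrix of the $D_n$-module $V(2,0)$). $\mathcal U_k(t)$: $\mathcal U_0=1$, $\mathcal U_1=t$, $\mathcal U_k=t\mathcal U_{k-1}-\mathcal U_{k-2}$. Vectors in $\mathbb C^{n^2}$ are written as stacks of $n$ blocks of length $n$. *)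

theory Defs
  imports Complex_Main "Jordan_Normal_Form.Char_Poly"
begin

definition prim_root_unity :: "nat \<Rightarrow> complex \<Rightarrow> bool" where
  "prim_root_unity n q \<longleftrightarrow> q ^ n = 1 \<and> (\<forall>k. 0 < k \<and> k < n \<longrightarrow> q ^ k \<noteq> 1)"

fun chebU :: "nat \<Rightarrow> complex \<Rightarrow> complex" where
  "chebU 0 t = 1"
| "chebU (Suc 0) t = t"
| "chebU (Suc (Suc k)) t = t * chebU (Suc k) t - chebU k t"

definition idE :: "nat \<Rightarrow> nat \<Rightarrow> complex" where
  "idE i k = (if i = k then 1 else 0)"

definition cycZ :: "nat \<Rightarrow> nat \<Rightarrow> nat \<Rightarrow> complex" where
  "cycZ n i k = (if k = (i + 1) mod n then 1 else 0)"

text \<open>Entry (i,k) of block M_(a,b) of the McKay matrix.\<close>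
definition mckay_block :: "nat \<Rightarrow> nat \<Rightarrow> nat \<Rightarrow> nat \<Rightarrow> nat \<Rightarrow> complex" where
  "mckay_block n a b i k =
     (if a \<le> n - 2 \<and> b = a + 1 then idE i k
      else if 1 \<le> a \<and> a \<le> n - 2 \<and> b + 1 = a then cycZ n i k
      else if a = n - 1 \<and> b = 0 then 2 * idE i k
      else if a = n - 1 \<and> b = n - 2 then 2 * cycZ n i k
      else 0)"

definition mckayM :: "nat \<Rightarrow> complex mat" where
  "mckayM n = mat (n * n) (n * n)
     (\<lambda>(p, p'). mckay_block n (p div n) (p' div n) (p mod n) (p' mod n))"

definition stack :: "nat \<Rightarrow> (nat \<Rightarrow> complex vec) \<Rightarrow> complex vec" where
  "stack n xs = vec (n * n) (\<lambda>p. xs (p div n) $ (p mod n))"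

definition vvec :: "nat \<Rightarrow> complex \<Rightarrow> nat \<Rightarrow> complex vec" where
  "vvec n q r = vec n (\<lambda>i. q ^ (2 * i * r))"

definition xblock :: "nat \<Rightarrow> complex \<Rightarrow> nat \<Rightarrow> nat \<Rightarrow> nat \<Rightarrow> complex vec" where
  "xblock n q r j k =
     (let t = q ^ j + inverse (q ^ j); v = vvec n q r in
      if k = 0 then v
      else (q ^ (k * r) * chebU k t) \<cdot>\<^sub>v v +
           (q ^ ((k - 1) * r) *
              (\<Sum>s = 0..(k - 1) div 2. of_nat (k - 2 * s) * chebU (k - 1 - 2 * s) t)) \<cdot>\<^sub>v v)"

definition xvec :: "nat \<Rightarrow> complex \<Rightarrow> nat \<Rightarrow> nat \<Rightarrow> complex vec" where
  "xvec n q r j = stack n (xblock n q r j)"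

definition evec :: "nat \<Rightarrow> complex \<Rightarrow> nat \<Rightarrow> nat \<Rightarrow> complex vec" where
  "evec n q r j = stack n (\<lambda>k. (q ^ (k * r) * chebU k (q ^ j + inverse (q ^ j))) \<cdot>\<^sub>v vvec n q r)"

definition lam :: "complex \<Rightarrow> nat \<Rightarrow> nat \<Rightarrow> complex" where
  "lam q r j = q ^ r * (q ^ j + inverse (q ^ j))"

end

theory Submission
  imports Defs
begin


lemma chebU_ss: "chebU (Suc (Suc k)) t = t * chebU (Suc k) t - chebU k t" by simp

lemma chebU_closed:
  assumes "x * y = 1"
  shows "(x - y) * chebU k (x + y) = x ^ (k+1) - y ^ (k+1)
       \<and> (x - y) * chebU (Suc k) (x + y) = x ^ (k+2) - y ^ (k+2)"
proof (induction k)
  case 0 then show ?case using assms by (simp add: algebra_simps power2_eq_square)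
next
  case (Suc k)
  then have h1: "(x - y) * chebU (Suc k) (x + y) = x ^ (k+2) - y ^ (k+2)"
    and h0: "(x - y) * chebU k (x + y) = x ^ (k+1) - y ^ (k+1)" by auto
  have "(x - y) * chebU (Suc (Suc k)) (x + y) = (x+y) * ((x - y) * chebU (Suc k) (x + y)) - (x - y) * chebU k (x + y)"
    by (simp add: algebra_simps)
  also have "\<dots> = (x+y)*(x ^ (k+2) - y ^ (k+2)) - x*y*(x ^ (k+1) - y ^ (k+1))"
    using h0 h1 assms by simp
  also have "\<dots> = x^(k+3) - y^(k+3)" by (simp add: algebra_simps eval_nat_numeral)
  finally show ?case using h1 by (simp add: numeral_3_eq_3)
qed

definition W :: "nat \<Rightarrow> complex \<Rightarrow> complex" where
  "W k t = (\<Sum>s = 0..(k - 1) div 2. of_nat (k - 2 * s) * chebU (k - 1 - 2 * s) t)"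

lemma W0: "W 0 t = 0" by (simp add: W_def)
lemma W1: "W 1 t = 1" by (simp add: W_def)
lemma W1s: "W (Suc 0) t = 1" by (simp add: W_def)

lemma W_step: "W (k+2) t = W k t + of_nat (k+2) * chebU (k+1) t"
proof (cases k)
  case 0 then show ?thesis by (simp add: W_def)
next
  case (Suc m)
  have e: "(k + 2 - 1) div 2 = Suc ((k - 1) div 2)" using Suc by simp
  have "W (k+2) t = (\<Sum>s = 0..Suc ((k - 1) div 2). of_nat (k + 2 - 2 * s) * chebU (k + 2 - 1 - 2 * s) t)"
    unfolding W_def e ..
  also have "\<dots> = of_nat (k+2) * chebU (k+1) t + (\<Sum>s = Suc 0..Suc ((k - 1) div 2). of_nat (k + 2 - 2 * s) * chebU (k + 2 - 1 - 2 * s) t)"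
    by (subst sum.atLeast_Suc_atMost) auto
  also have "(\<Sum>s = Suc 0..Suc ((k - 1) div 2). of_nat (k + 2 - 2 * s) * chebU (k + 2 - 1 - 2 * s) t)
     = (\<Sum>s = 0..(k - 1) div 2. of_nat (k + 2 - 2 * Suc s) * chebU (k + 2 - 1 - 2 * Suc s) t)"
    by (rule sum.shift_bounds_cl_Suc_ivl)
  also have "\<dots> = W k t" unfolding W_def
    by (rule sum.cong) (auto simp: Suc)
  finally show ?thesis by simp
qed

lemma W_rec: "W (k+2) t = t * W (k+1) t - W k t + chebU (k+1) t
   \<and> W (k+3) t = t * W (k+2) t - W (k+1) t + chebU (k+2) t"
proof (induction k)
  case 0
  have a: "W 2 t = 2 * t" using W_step[of 0 t] by (simp add: W0 numeral_2_eq_2)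
  have b: "W 3 t = 1 + 3 * (t*t - 1)" using W_step[of 1 t] W1[of t] by (simp add: numeral_3_eq_3 algebra_simps)
  show ?case using a b by (simp add: W0 W1s eval_nat_numeral algebra_simps)
next
  case (Suc k)
  then have h: "W (k+3) t = t * W (k+2) t - W (k+1) t + chebU (k+2) t"
     and h0: "W (k+2) t = t * W (k+1) t - W k t + chebU (k+1) t" by auto
  have s1: "W (k+4) t = W (k+2) t + of_nat (k+4) * chebU (k+3) t" using W_step[of "k+2" t] by (simp add: eval_nat_numeral algebra_simps del: chebU.simps)
  have s2: "W (k+3) t = W (k+1) t + of_nat (k+3) * chebU (k+2) t" using W_step[of "k+1" t] by (simp add: eval_nat_numeral algebra_simps del: chebU.simps)
  have s3: "W (k+2) t = W k t + of_nat (k+2) * chebU (k+1) t" using W_step[of k t] by (simp del: chebU.simps)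
  have u: "chebU (k+3) t = t * chebU (k+2) t - chebU (k+1) t"
    using chebU_ss[of "k+1" t] by (simp add: eval_nat_numeral)
  have "W (k+4) t = t * W (k+3) t - W (k+2) t + chebU (k+3) t"
  proof -
    have key: "\<And>w0 w1 w2 w3 w4 u1 u2 u3::complex. w4 = w2 + of_nat (k+4) * u3 \<Longrightarrow> w3 = w1 + of_nat (k+3) * u2
      \<Longrightarrow> w2 = w0 + of_nat (k+2) * u1 \<Longrightarrow> u3 = t * u2 - u1 \<Longrightarrow> w2 = t * w1 - w0 + u1 \<Longrightarrow> w4 = t * w3 - w2 + u3"
    proof -
      fix w0 w1 w2 w3 w4 u1 u2 u3 :: complex
      assume a1: "w4 = w2 + of_nat (k+4) * u3" and a2: "w3 = w1 + of_nat (k+3) * u2"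
        and a3: "w2 = w0 + of_nat (k+2) * u1" and a4: "u3 = t * u2 - u1" and a5: "w2 = t * w1 - w0 + u1"
      have "w4 - (t * w3 - w2 + u3) = 2*w2 - t*w1 + of_nat (k+3)*(u3 - t*u2)"
        unfolding a1 a2 by (simp add: algebra_simps)
      also have "\<dots> = 2*w2 - t*w1 - of_nat (k+3)*u1" unfolding a4 by (simp add: algebra_simps)
      also have "\<dots> = w2 - w0 - of_nat (k+2)*u1" using a5 by (simp add: algebra_simps)
      also have "\<dots> = 0" using a3 by simp
      finally show "w4 = t * w3 - w2 + u3" by simp
    qed
    show ?thesis by (rule key[OF s1 s2 s3 u h0])
  qed
  then show ?case using h by (simp add: eval_nat_numeral)
qed



lemma sum_nn:
  fixes f :: "nat \<Rightarrow> nat \<Rightarrow> 'a::comm_monoid_add"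
  shows "(\<Sum>p<n*n. f (p div n) (p mod n)) = (\<Sum>b<n. \<Sum>k<n. f b k)"
proof (cases "n = 0")
  case True then show ?thesis by simp
next
  case False
  have "(\<Sum>p<n*n. f (p div n) (p mod n)) = (\<Sum>b<n. \<Sum>p\<in>{b*n..<b*n+n}. f (p div n) (p mod n))"
    by (rule sum.nat_group[symmetric])
  also have "\<dots> = (\<Sum>b<n. \<Sum>k<n. f b k)"
  proof (rule sum.cong[OF refl])
    fix b assume "b \<in> {..<n}"
    have "(\<Sum>p\<in>{b*n..<b*n+n}. f (p div n) (p mod n)) = (\<Sum>p\<in>{0+b*n..<n+b*n}. f (p div n) (p mod n))"
      by (simp add: add.commute)
    also have "\<dots> = (\<Sum>k\<in>{0..<n}. f ((k + b*n) div n) ((k + b*n) mod n))"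
      by (rule sum.shift_bounds_nat_ivl)
    also have "\<dots> = (\<Sum>k<n. f b k)"
      using False by (intro sum.cong) auto
    finally show "(\<Sum>p\<in>{b*n..<b*n+n}. f (p div n) (p mod n)) = (\<Sum>k<n. f b k)" .
  qed
  finally show ?thesis .
qed

lemma pow_mod: assumes "q ^ n = (1::complex)" shows "q ^ a = q ^ (a mod n)"
proof -
  have "a = n * (a div n) + a mod n" by simp
  then have "q ^ a = q ^ (n * (a div n) + a mod n)" by metis
  also have "\<dots> = q ^ (a mod n)" by (simp only: power_add power_mult assms power_one mult_1)
  finally show ?thesis .
qed

lemma vshift: assumes "q ^ n = (1::complex)" "i < n"
  shows "q ^ (2 * ((i+1) mod n) * r) = q ^ (2*r) * q ^ (2 * i * r)"
proof -
  have "(2 * ((i+1) mod n) * r) mod n = (2 * (i+1) * r) mod n"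
    by (metis mod_mult_left_eq mod_mult_right_eq mult.assoc mult.commute)
  then have "q ^ (2 * ((i+1) mod n) * r) = q ^ (2 * (i+1) * r)"
    using pow_mod[OF assms(1)] by metis
  also have "\<dots> = q ^ (2*r) * q ^ (2 * i * r)" by (simp add: power_add[symmetric] algebra_simps)
  finally show ?thesis .
qed

lemma sum_idE: assumes "i < n" shows "(\<Sum>k<n. idE i k * w k) = w i"
proof -
  have h: "(\<lambda>k. idE i k * w k) = (\<lambda>k. if k = i then w i else 0)" by (auto simp: idE_def fun_eq_iff)
  show ?thesis unfolding h using assms by simp
qed

lemma sum_cycZ: "i < n \<Longrightarrow> (\<Sum>k<n. cycZ n i k * w k) = w ((i+1) mod n)"
proof -
  assume "i < n" then have "n > 0" by simp
  then have "(i+1) mod n \<in> {..<n}" by simp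
  moreover have h: "(\<lambda>k. cycZ n i k * w k) = (\<lambda>k. if k = (i+1) mod n then w ((i+1) mod n) else 0)"
    by (auto simp: cycZ_def fun_eq_iff)
  ultimately show ?thesis unfolding h by (simp only: sum.delta finite_lessThan) simp
qed

definition gam :: "nat \<Rightarrow> complex \<Rightarrow> (nat \<Rightarrow> complex) \<Rightarrow> nat \<Rightarrow> complex" where
  "gam n c2 \<alpha> a = (if a \<le> n-2 then \<alpha> (a+1) else 0) + (if 1 \<le> a \<and> a \<le> n-2 then c2 * \<alpha> (a-1) else 0)
     + (if a = n-1 then 2 * \<alpha> 0 else 0) + (if a = n-1 then 2 * c2 * \<alpha> (n-2) else 0)"

lemma blk_expand: assumes "n \<ge> 3" "a < n"
  shows "mckay_block n a b i k = (if a \<le> n-2 \<and> b = a+1 then 1 else 0) * idE i k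
     + (if 1 \<le> a \<and> a \<le> n-2 \<and> b + 1 = a then 1 else 0) * cycZ n i k
     + (if a = n-1 \<and> b = 0 then 2 else 0) * idE i k
     + (if a = n-1 \<and> b = n-2 then 2 else 0) * cycZ n i k"
proof (cases "a \<le> n-2")
  case True then have "a \<noteq> n-1" using assms by auto
  then show ?thesis using True by (cases "b = a+1"; cases "b+1 = a") (auto simp: mckay_block_def)
next
  case False then have "a = n-1" using assms by auto
  moreover have "n - 1 > n - 2" "n - 2 \<noteq> 0" using assms by auto
  ultimately show ?thesis using False by (cases "b = 0"; cases "b = n-2") (auto simp: mckay_block_def)
qed

lemma lin4: "((if P1 then 1 else 0) + (if P2 then 1 else 0) * c + (if P3 then 2 else 0) + (if P4 then 2 else 0) * c) * (x::complex) * v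
  = ((if P1 then x else 0) + (if P2 then c*x else 0) + (if P3 then 2*x else 0) + (if P4 then 2*c*x else 0)) * v"
  by (cases P1; cases P2; cases P3; cases P4) (simp_all add: algebra_simps)

lemma M_mult:
  assumes n3: "n \<ge> 3" and qn: "q ^ n = 1"
  shows "mckayM n *\<^sub>v stack n (\<lambda>b. \<alpha> b \<cdot>\<^sub>v vvec n q r) = stack n (\<lambda>a. gam n (q^(2*r)) \<alpha> a \<cdot>\<^sub>v vvec n q r)"
proof (rule eq_vecI)
  show "dim_vec (mckayM n *\<^sub>v stack n (\<lambda>b. \<alpha> b \<cdot>\<^sub>v vvec n q r)) = dim_vec (stack n (\<lambda>a. gam n (q^(2*r)) \<alpha> a \<cdot>\<^sub>v vvec n q r))"
    by (simp add: mckayM_def stack_def)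
next
  fix p assume "p < dim_vec (stack n (\<lambda>a. gam n (q^(2*r)) \<alpha> a \<cdot>\<^sub>v vvec n q r))"
  then have p: "p < n * n" by (simp add: stack_def)
  define a where "a = p div n"
  define i where "i = p mod n"
  have n0: "n > 0" using n3 by simp
  have a: "a < n" using p unfolding a_def by (simp add: less_mult_imp_div_less)
  have i: "i < n" using n0 unfolding i_def by simp
  let ?c = "q^(2*r)"
  let ?v = "\<lambda>k. q ^ (2 * k * r)"
  have "(mckayM n *\<^sub>v stack n (\<lambda>b. \<alpha> b \<cdot>\<^sub>v vvec n q r)) $ p
      = (\<Sum>p'<n*n. mckay_block n a (p' div n) i (p' mod n) * (\<alpha> (p' div n) * ?v (p' mod n)))"
    using p unfolding mckayM_def stack_def a_def i_def
    apply (simp add: vvec_def atLeast0LessThan scalar_prod_def)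
    apply (intro sum.cong refl)
    using n0 by simp
  also have "\<dots> = (\<Sum>b<n. \<Sum>k<n. mckay_block n a b i k * (\<alpha> b * ?v k))"
    by (rule sum_nn)
  also have "\<dots> = (\<Sum>b<n. ((if a \<le> n-2 \<and> b = a+1 then 1 else 0) + (if 1 \<le> a \<and> a \<le> n-2 \<and> b + 1 = a then 1 else 0) * ?c
       + (if a = n-1 \<and> b = 0 then 2 else 0) + (if a = n-1 \<and> b = n-2 then 2 else 0) * ?c) * \<alpha> b * ?v i)"
  proof (rule sum.cong[OF refl])
    fix b assume "b \<in> {..<n}"
    have "(\<Sum>k<n. mckay_block n a b i k * (\<alpha> b * ?v k)) =
      (if a \<le> n-2 \<and> b = a+1 then 1 else 0) * \<alpha> b * (\<Sum>k<n. idE i k * ?v k)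
     + (if 1 \<le> a \<and> a \<le> n-2 \<and> b + 1 = a then 1 else 0) * \<alpha> b * (\<Sum>k<n. cycZ n i k * ?v k)
     + (if a = n-1 \<and> b = 0 then 2 else 0) * \<alpha> b * (\<Sum>k<n. idE i k * ?v k)
     + (if a = n-1 \<and> b = n-2 then 2 else 0) * \<alpha> b * (\<Sum>k<n. cycZ n i k * ?v k)"
      unfolding blk_expand[OF n3 a] by (simp add: sum.distrib sum_distrib_left algebra_simps)
    also have "\<dots> = ((if a \<le> n-2 \<and> b = a+1 then 1 else 0) + (if 1 \<le> a \<and> a \<le> n-2 \<and> b + 1 = a then 1 else 0) * ?c
       + (if a = n-1 \<and> b = 0 then 2 else 0) + (if a = n-1 \<and> b = n-2 then 2 else 0) * ?c) * \<alpha> b * ?v i"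
      unfolding sum_idE[OF i] sum_cycZ[OF i] vshift[OF qn i] by (simp add: algebra_simps)
    finally show "(\<Sum>k<n. mckay_block n a b i k * (\<alpha> b * ?v k)) = \<dots>" .
  qed
  also have "\<dots> = gam n ?c \<alpha> a * ?v i"
  proof -
    have "(\<Sum>b<n. ((if a \<le> n-2 \<and> b = a+1 then 1 else 0) + (if 1 \<le> a \<and> a \<le> n-2 \<and> b + 1 = a then 1 else 0) * ?c
       + (if a = n-1 \<and> b = 0 then 2 else 0) + (if a = n-1 \<and> b = n-2 then 2 else 0) * ?c) * \<alpha> b * ?v i)
      = ((\<Sum>b<n. (if a \<le> n-2 \<and> b = a+1 then \<alpha> b else 0)) + (\<Sum>b<n. (if 1 \<le> a \<and> a \<le> n-2 \<and> b + 1 = a then ?c * \<alpha> b else 0))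
       + (\<Sum>b<n. (if a = n-1 \<and> b = 0 then 2 * \<alpha> b else 0)) + (\<Sum>b<n. (if a = n-1 \<and> b = n-2 then 2 * ?c * \<alpha> b else 0))) * ?v i"
    proof -
      have pt: "\<And>b. ((if a \<le> n-2 \<and> b = a+1 then 1 else 0) + (if 1 \<le> a \<and> a \<le> n-2 \<and> b + 1 = a then 1 else 0) * ?c
       + (if a = n-1 \<and> b = 0 then 2 else 0) + (if a = n-1 \<and> b = n-2 then 2 else 0) * ?c) * \<alpha> b * ?v i
        = ((if a \<le> n-2 \<and> b = a+1 then \<alpha> b else 0) + (if 1 \<le> a \<and> a \<le> n-2 \<and> b + 1 = a then ?c * \<alpha> b else 0)
       + (if a = n-1 \<and> b = 0 then 2 * \<alpha> b else 0) + (if a = n-1 \<and> b = n-2 then 2 * ?c * \<alpha> b else 0)) * ?v i"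
        by (rule lin4)
      show ?thesis unfolding pt by (simp only: sum_distrib_right[symmetric] sum.distrib)
    qed
    also have "\<dots> = gam n ?c \<alpha> a * ?v i"
    proof -
      have s1: "(\<Sum>b<n. (if a \<le> n-2 \<and> b = a+1 then \<alpha> b else 0)) = (if a \<le> n-2 then \<alpha> (a+1) else 0)"
        using n3 a by (cases "a \<le> n-2") auto
      have s2: "(\<Sum>b<n. (if 1 \<le> a \<and> a \<le> n-2 \<and> b + 1 = a then ?c * \<alpha> b else 0)) = (if 1 \<le> a \<and> a \<le> n-2 then ?c * \<alpha> (a-1) else 0)"
      proof (cases "1 \<le> a \<and> a \<le> n-2")
        case True
        then have "\<And>b. (b + 1 = a) = (b = a - 1)" by auto
        then show ?thesis using True a by (simp add: sum.delta)
      qed auto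
      have s3: "(\<Sum>b<n. (if a = n-1 \<and> b = 0 then 2 * \<alpha> b else 0)) = (if a = n-1 then 2 * \<alpha> 0 else 0)"
        using n3 by (cases "a = n-1") auto
      have s4: "(\<Sum>b<n. (if a = n-1 \<and> b = n-2 then 2 * ?c * \<alpha> b else 0)) = (if a = n-1 then 2 * ?c * \<alpha> (n-2) else 0)"
        using n3 by (cases "a = n-1") auto
      show ?thesis unfolding s1 s2 s3 s4 gam_def by simp
    qed
    finally show ?thesis .
  qed
  also have "\<dots> = stack n (\<lambda>a. gam n ?c \<alpha> a \<cdot>\<^sub>v vvec n q r) $ p"
    using p i unfolding stack_def a_def i_def by (simp add: vvec_def)
  finally show "(mckayM n *\<^sub>v stack n (\<lambda>b. \<alpha> b \<cdot>\<^sub>v vvec n q r)) $ p = stack n (\<lambda>a. gam n ?c \<alpha> a \<cdot>\<^sub>v vvec n q r) $ p" .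
qed



lemma stack_cong: "(\<And>k. k < n \<Longrightarrow> F k = G k) \<Longrightarrow> stack n F = stack n G"
  unfolding stack_def
  by (intro eq_vecI) (auto simp: less_mult_imp_div_less)

lemma stack_lin:
  "a \<cdot>\<^sub>v stack n (\<lambda>k. f k \<cdot>\<^sub>v vvec n q r) + stack n (\<lambda>k. g k \<cdot>\<^sub>v vvec n q r)
   = stack n (\<lambda>k. (a * f k + g k) \<cdot>\<^sub>v vvec n q r)"
proof (cases "n = 0")
  case True then show ?thesis by (intro eq_vecI) (auto simp: stack_def)
next
  case False
  then show ?thesis unfolding stack_def
    by (intro eq_vecI) (auto simp: vvec_def algebra_simps)
qed

lemma stack_smult:
  "a \<cdot>\<^sub>v stack n (\<lambda>k. f k \<cdot>\<^sub>v vvec n q r) = stack n (\<lambda>k. (a * f k) \<cdot>\<^sub>v vvec n q r)"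
proof (cases "n = 0")
  case True then show ?thesis by (intro eq_vecI) (auto simp: stack_def)
next
  case False
  then show ?thesis unfolding stack_def
    by (intro eq_vecI) (auto simp: vvec_def algebra_simps)
qed

lemma key_int:
  fixes c d t u1 u2 u3 w1 w2 w3 :: complex
  assumes "u3 = t * u2 - u1" "w3 = t * w2 - w1 + u2"
  shows "c*d*u3 + d*w3 + c*d*u1 + d*w1 = c*d*t*u2 + d*t*w2 + d*u2"
  unfolding assms by (simp add: algebra_simps)

lemma key_last:
  fixes c t P Q C u1 u2 w1 w2 :: complex
  assumes "c^2 * P = 1" "c^2 * Q = C" "c * P = C" "u2 = 0" "u1 = -1" "t * w2 = 2 * w1"
  shows "2 + 2*c^2*(P*u1 + Q*w1) = c*t*(C*u2 + P*w2) + C*u2"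
proof -
  have "2 + 2*c^2*(P*u1 + Q*w1) = 2 + 2*(c^2*P)*u1 + 2*(c^2*Q)*w1" by (simp add: algebra_simps)
  also have "\<dots> = 2 * C * w1" using assms by simp
  also have "\<dots> = C * (t * w2)" using assms by simp
  also have "\<dots> = c*t*(C*u2 + P*w2) + C*u2" using assms(3,4) by (simp add: algebra_simps)
  finally show ?thesis .
qed



theorem mainTheorem13:
  fixes n r j :: nat and q :: complex
  assumes "n \<ge> 3" and "odd n" and "prim_root_unity n q"
    and "r < n" and "1 \<le> j" and "j \<le> (n - 1) div 2"
  shows "mckayM n *\<^sub>v xvec n q r j = lam q r j \<cdot>\<^sub>v xvec n q r j + evec n q r j
         \<and> eigenvector (mckayM n) (evec n q r j) (lam q r j)"
proof -
  have n3: "n \<ge> 3" by fact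
  have qn: "q ^ n = 1" using assms(3) by (simp add: prim_root_unity_def)
  have q0: "q \<noteq> 0" using qn n3 by (metis power_0_left zero_neq_one not_numeral_le_zero le_zero_eq neq0_conv)
  define c where "c = q ^ r"
  define x where "x = q ^ j"
  define y where "y = inverse x"
  define t where "t = x + y"
  define v where "v = vvec n q r"
  have x0: "x \<noteq> 0" using q0 by (simp add: x_def)
  have xy: "x * y = 1" using x0 by (simp add: y_def)
  have xn: "x ^ n = 1" unfolding x_def by (metis power_mult power_mult_distrib qn power_one mult.commute)
  have yn: "y ^ n = 1" unfolding y_def using xn by (simp add: power_inverse)
  have cn: "c ^ n = 1" unfolding c_def by (metis power_mult qn power_one mult.commute)
  have xny: "x \<noteq> y"
  proof
    assume "x = y"
    then have "q ^ (2*j) = 1" using xy unfolding x_def by (simp add: power_mult power2_eq_square mult.commute)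
    moreover have "0 < 2*j" "2*j < n" using assms by auto
    ultimately show False using assms(3) unfolding prim_root_unity_def by blast
  qed
  obtain m where m: "n = m + 3" using n3 by (metis add.commute le_Suc_ex)
  have Un1: "chebU (m+2) t = 0"
  proof -
    have e: "m+2+1 = n" using m by simp
    have "(x - y) * chebU (m+2) t = x ^ n - y ^ n" using conjunct1[OF chebU_closed[OF xy, of "m+2"]] unfolding t_def e .
    then show ?thesis using xn yn xny by simp
  qed
  have Un2: "chebU (m+1) t = -1"
  proof -
    have e: "m+1+1 = m+2" by simp
    have "(x - y) * chebU (m+1) t = x ^ (m+2) - y ^ (m+2)" using conjunct1[OF chebU_closed[OF xy, of "m+1"]] unfolding t_def e .
    moreover have "x ^ (m+2) = y" proof -
      have sn: "Suc (m+2) = n" using m by simp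
      have "x ^ (m+2) * x = x ^ Suc (m+2)" by (simp only: power_Suc2)
      then have "x ^ (m+2) * x = 1" unfolding sn xn .
      then show ?thesis using xy x0 by (metis mult.commute mult_left_cancel)
    qed
    moreover have "y ^ (m+2) = x" proof -
      have sn: "Suc (m+2) = n" using m by simp
      have "y ^ (m+2) * y = y ^ Suc (m+2)" by (simp only: power_Suc2)
      then have "y ^ (m+2) * y = 1" unfolding sn yn .
      then show ?thesis using xy x0 by (metis mult.commute mult_left_cancel mult_zero_left zero_neq_one)
    qed
    ultimately have "(x - y) * chebU (m+1) t = (x - y) * (-1)" by simp
    moreover have "x - y \<noteq> 0" using xny by simp
    ultimately show ?thesis by (metis mult_left_cancel)
  qed
  define ax where "ax k = c^k * chebU k t + c^(k-1) * W k t" for k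
  define ee where "ee k = c^k * chebU k t" for k
  have ax0: "ax 0 = 1" by (simp add: ax_def W0)
  have qkr: "q ^ (k*r) = c ^ k" for k by (simp add: c_def power_mult[symmetric] mult.commute)
  have xv: "xvec n q r j = stack n (\<lambda>k. ax k \<cdot>\<^sub>v v)"
    unfolding xvec_def
  proof (rule stack_cong)
    fix k assume "k < n"
    show "xblock n q r j k = ax k \<cdot>\<^sub>v v"
    proof (cases "k = 0")
      case True then show ?thesis by (simp add: xblock_def ax0 v_def)
    next
      case False
      then show ?thesis unfolding xblock_def Let_def
        by (simp add: ax_def W_def add_smult_distrib_vec qkr v_def x_def y_def t_def)
    qed
  qed
  have ev: "evec n q r j = stack n (\<lambda>k. ee k \<cdot>\<^sub>v v)"
    unfolding evec_def ee_def qkr v_def t_def x_def y_def ..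
  have lm: "lam q r j = c * t" by (simp add: lam_def c_def t_def x_def y_def)
  have c2: "q ^ (2*r) = c^2" by (simp add: c_def power_mult[symmetric] mult.commute)
  have Mx: "mckayM n *\<^sub>v xvec n q r j = stack n (\<lambda>a. gam n (c^2) ax a \<cdot>\<^sub>v v)"
    unfolding xv v_def M_mult[OF n3 qn] c2 ..
  have Me: "mckayM n *\<^sub>v evec n q r j = stack n (\<lambda>a. gam n (c^2) ee a \<cdot>\<^sub>v v)"
    unfolding ev v_def M_mult[OF n3 qn] c2 ..
  have cm3: "c ^ (m+3) = 1" using cn m by simp
  have Wl: "t * W (m+2) t = 2 * W (m+1) t"
  proof -
    have a1: "W (m+3) t = t * W (m+2) t - W (m+1) t + chebU (m+2) t" using conjunct2[OF W_rec[of m t]] .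
    have a2: "W (m+1+2) t = W (m+1) t + of_nat (m+1+2) * chebU (m+1+1) t" by (rule W_step)
    have e1: "m+1+2 = m+3" "m+1+1 = m+2" by simp_all
    from a1 a2 show ?thesis unfolding e1 Un1 by simp
  qed
  have scal1: "gam n (c^2) ax a = c * t * ax a + ee a" if a: "a < n" for a
  proof -
    have "a = 0 \<or> a = n - 1 \<or> (0 < a \<and> a \<le> n - 2)" using a by arith
    then consider "a = 0" | "a = n - 1" | b where "a = Suc b" "a \<le> n - 2"
      by (metis Suc_pred)
    then show ?thesis
    proof cases
      case 1
      then show ?thesis using n3 by (simp add: gam_def ax_def ee_def W0 W1s)
    next
      case 2
      have g: "gam n (c^2) ax a = 2 + 2*c^2*(c^(m+1) * chebU (m+1) t + c^m * W (m+1) t)"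
        using 2 m by (simp add: gam_def ax_def W0 numeral_2_eq_2 numeral_3_eq_3)
      have r: "c * t * ax a + ee a = c*t*(c^(m+2) * chebU (m+2) t + c^(m+1) * W (m+2) t) + c^(m+2) * chebU (m+2) t"
        using 2 m by (simp add: ax_def ee_def numeral_2_eq_2 numeral_3_eq_3)
      have k1: "c^2 * c^(m+1) = 1"
      proof -
        have "c^2 * c^(m+1) = c^(2+(m+1))" by (rule power_add[symmetric])
        also have "2+(m+1) = m+3" by simp
        finally show ?thesis using cm3 by simp
      qed
      have k2: "c^2 * c^m = c^(m+2)" by (simp add: power_add[symmetric])
      have k3: "c * c^(m+1) = c^(m+2)" by simp
      show ?thesis unfolding g r by (rule key_last[OF k1 k2 k3 Un1 Un2 Wl])
    next
      case 3
      show ?thesis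
      proof (cases b)
        case 0
        have u2: "chebU 2 t = t * t - 1" by (simp add: numeral_2_eq_2)
        have w2: "W 2 t = 2 * t" using W_step[of 0 t] by (simp add: W0 numeral_2_eq_2)
        have "a \<noteq> n - 1" "a \<le> n - 2" "1 \<le> a" using 3 0 n3 by auto
        then have g: "gam n (c^2) ax a = ax 2 + c^2 * ax 0" using 3 0 by (simp add: gam_def numeral_2_eq_2)
        show ?thesis unfolding g using 3 0
          by (simp add: ax_def ee_def u2 w2 W0 W1s algebra_simps power2_eq_square)
      next
        case (Suc b')
        have "a \<noteq> n - 1" "a \<le> n - 2" "1 \<le> a" using 3 n3 by auto
        then have g0: "gam n (c^2) ax a = ax (b'+3) + c^2 * ax (b'+1)" using 3 Suc by (simp add: gam_def eval_nat_numeral)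
        have g: "gam n (c^2) ax a = c*c^(b'+2)*chebU (b'+3) t + c^(b'+2)*W (b'+3) t + c*c^(b'+2)*chebU (b'+1) t + c^(b'+2)*W (b'+1) t"
          unfolding g0 ax_def by (simp add: algebra_simps power_add eval_nat_numeral del: chebU.simps)
        have r: "c * t * ax a + ee a = c*c^(b'+2)*t*chebU (b'+2) t + c^(b'+2)*t*W (b'+2) t + c^(b'+2)*chebU (b'+2) t"
          unfolding ax_def ee_def using 3 Suc by (simp add: algebra_simps power_add eval_nat_numeral del: chebU.simps)
        have u3: "chebU (b'+3) t = t * chebU (b'+2) t - chebU (b'+1) t" using chebU_ss[of "Suc b'" t] by (simp add: eval_nat_numeral del: chebU.simps)
        have w3: "W (b'+3) t = t * W (b'+2) t - W (b'+1) t + chebU (b'+2) t" using conjunct2[OF W_rec[of b' t]] .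
        show ?thesis unfolding g r by (rule key_int[OF u3 w3])
      qed
    qed
  qed
  have part1: "mckayM n *\<^sub>v xvec n q r j = lam q r j \<cdot>\<^sub>v xvec n q r j + evec n q r j"
    unfolding Mx unfolding xv ev lm v_def stack_lin
    by (rule stack_cong) (simp add: scal1)
  have scal2: "gam n (c^2) ee a = c * t * ee a" if a: "a < n" for a
  proof -
    have "a = 0 \<or> a = n - 1 \<or> (0 < a \<and> a \<le> n - 2)" using a by arith
    then consider "a = 0" | "a = n - 1" | b where "a = Suc b" "a \<le> n - 2"
      by (metis Suc_pred)
    then show ?thesis
    proof cases
      case 1
      then show ?thesis using n3 by (simp add: gam_def ee_def)
    next
      case 2
      have g: "gam n (c^2) ee a = 2 + 2*(c^2 * c^(m+1)) * chebU (m+1) t"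
        using 2 m by (simp add: gam_def ee_def numeral_2_eq_2 numeral_3_eq_3)
      have r: "c * t * ee a = c * t * (c^(m+2) * chebU (m+2) t)"
        using 2 m by (simp add: ee_def numeral_2_eq_2 numeral_3_eq_3)
      have k1: "c^2 * c^(m+1) = 1"
      proof -
        have "c^2 * c^(m+1) = c^(2+(m+1))" by (rule power_add[symmetric])
        also have "2+(m+1) = m+3" by simp
        finally show ?thesis using cm3 by simp
      qed
      show ?thesis unfolding g r k1 Un1 Un2 by simp
    next
      case 3
      have "a \<noteq> n - 1" "a \<le> n - 2" "1 \<le> a" using 3 n3 by auto
      then have g0: "gam n (c^2) ee a = ee (b+2) + c^2 * ee b" using 3 by (simp add: gam_def eval_nat_numeral)
      have g: "gam n (c^2) ee a = c^(b+2) * (chebU (b+2) t + chebU b t)"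
        unfolding g0 ee_def by (simp add: algebra_simps power_add eval_nat_numeral del: chebU.simps)
      have r: "c * t * ee a = c^(b+2) * (t * chebU (b+1) t)"
        unfolding ee_def using 3 by (simp add: algebra_simps power_add eval_nat_numeral del: chebU.simps)
      have u: "chebU (b+2) t = t * chebU (b+1) t - chebU b t" using chebU_ss[of b t] by (simp add: eval_nat_numeral del: chebU.simps)
      show ?thesis unfolding g r u by simp
    qed
  qed
  have part2: "mckayM n *\<^sub>v evec n q r j = lam q r j \<cdot>\<^sub>v evec n q r j"
  proof -
    have "mckayM n *\<^sub>v evec n q r j = stack n (\<lambda>k. (c * t * ee k) \<cdot>\<^sub>v vvec n q r)"
      unfolding Me v_def by (rule stack_cong) (simp add: scal2)
    also have "\<dots> = lam q r j \<cdot>\<^sub>v evec n q r j"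
      unfolding ev lm v_def stack_smult ..
    finally show ?thesis .
  qed
  have nz: "evec n q r j \<noteq> 0\<^sub>v (n*n)"
  proof
    assume "evec n q r j = 0\<^sub>v (n*n)"
    then have "evec n q r j $ 0 = 0" using n3 by simp
    moreover have "evec n q r j $ 0 = 1" using n3 by (simp add: evec_def stack_def vvec_def)
    ultimately show False by simp
  qed
  have "eigenvector (mckayM n) (evec n q r j) (lam q r j)"
    unfolding eigenvector_def using part2 nz by (simp add: mckayM_def evec_def stack_def)
  then show ?thesis using part1 by simp
qed

end
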